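(* Let $\mu$ be a stationary ergodic, elliptic and non-degenerate probability measure on $\Omega$. Then $\mathbb P_0(T_{-1}=\infty)>0$ if and only if $\mathbb P_0(A^+)>0$.
   Context: Notation: $\mathbb N=\{1,2,\dots\}$. Cookie environments $\omega\in\Omega=[0,1]^{\mathbb Z\times\mathbb N}$; shift $(\theta\omega)(x,n)=\omega(x+1,n)$; $\mu$ stationary ergodic means $\theta$-invariant and ergodic; elliptic means $\mu((0,1)^{\mathbb Z\times\mathbb N})=1$. Under $P_{\omega,x}$ the excited random walk has $X_0=x$ and from $X_{n-1}$ steps to $X_{n-1}+1$ with probability $\omega(X_{n-1},\#\{k\le n-1:X_k=X_{n-1}\})$, otherwise to $X_{n-1}-1$; $\mathbb P_x=\int P_{\omega,x}\,d\mu(\omega)$. Equivalently the walk is driven by the random arrow environment $a(x,n)=\mathbf 1_{\{u(x,n)<\omega(x,n)\}}$, $u(x,n)$ i.i.d. Uniform$[0,1]$ independent of $\omega\sim\mu$, using at its $k$-th visit to $x$ the arrow $a(x,k)$ (1 = right, 0 = left). A sequence $b\in\{0,1\}^{\mathbb N}$ is non-degenerate if $b(i)\ne b(i+1)$ for infinitely many $i$; $\mu$ is non-degenerate if almost surely every $a(x,\cdot)$ is non-degenerate. $T_m=\inf\{t\ge0:X_t=m\}$, $A^+=\{\lim X_n=+\infty\}$. *)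

theory Defs
  imports "HOL-Probability.Probability"
begin

type_synonym cookie_env = "int \<times> nat \<Rightarrow> real"

text \<open>Cookie environments: omega(x,n) for x in Z, n in N = {1,2,...};
  the value at n = 0 is irrelevant. The space carries the product Borel sigma-algebra.\<close>

definition env_space :: "cookie_env measure" where
  "env_space = (\<Pi>\<^sub>M i\<in>UNIV. (borel :: real measure))"

definition shift_env :: "cookie_env \<Rightarrow> cookie_env" where
  "shift_env \<omega> = (\<lambda>(x, n). \<omega> (x + 1, n))"

definition stationary_ergodic :: "cookie_env measure \<Rightarrow> bool" where
  "stationary_ergodic \<mu> \<longleftrightarrow>
     shift_env \<in> measurable \<mu> \<mu> \<and> distr \<mu> \<mu> shift_env = \<mu> \<and>
     (\<forall>A\<in>sets \<mu>. shift_env -` A \<inter> space \<mu> = A \<longrightarrow> measure \<mu> A = 0 \<or> measure \<mu> A = 1)"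

definition elliptic :: "cookie_env measure \<Rightarrow> bool" where
  "elliptic \<mu> \<longleftrightarrow> (AE \<omega> in \<mu>. \<forall>x. \<forall>n\<ge>1. 0 < \<omega> (x, n) \<and> \<omega> (x, n) < 1)"

definition unif_space :: "(int \<times> nat \<Rightarrow> real) measure" where
  "unif_space = (\<Pi>\<^sub>M i\<in>UNIV. uniform_measure lborel {0..1::real})"

text \<open>Joint space of (omega, u); its measure is the annealed measure.\<close>
definition joint_space :: "cookie_env measure \<Rightarrow> (cookie_env \<times> (int \<times> nat \<Rightarrow> real)) measure" where
  "joint_space \<mu> = \<mu> \<Otimes>\<^sub>M unif_space"

text \<open>Arrow environment a(x,n) = 1 iff u(x,n) < omega(x,n); True = right step.\<close>
definition arrows :: "cookie_env \<Rightarrow> (int \<times> nat \<Rightarrow> real) \<Rightarrow> int \<Rightarrow> nat \<Rightarrow> bool" where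
  "arrows \<omega> u x n \<longleftrightarrow> u (x, n) < \<omega> (x, n)"

definition nondegenerate_seq :: "(nat \<Rightarrow> bool) \<Rightarrow> bool" where
  "nondegenerate_seq b \<longleftrightarrow> infinite {i. 1 \<le> i \<and> b i \<noteq> b (Suc i)}"

definition nondegenerate :: "cookie_env measure \<Rightarrow> bool" where
  "nondegenerate \<mu> \<longleftrightarrow>
     (AE p in joint_space \<mu>. \<forall>x. nondegenerate_seq (arrows (fst p) (snd p) x))"

text \<open>Walk driven by arrows: state at time n is (X_n, c) with
  c y = number of k \<le> n with X_k = y. From X_n it uses arrow a(X_n, c X_n).\<close>
fun erw_state :: "(int \<Rightarrow> nat \<Rightarrow> bool) \<Rightarrow> int \<Rightarrow> nat \<Rightarrow> int \<times> (int \<Rightarrow> nat)" where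
  "erw_state a x0 0 = (x0, (\<lambda>_. 0)(x0 := 1))"
| "erw_state a x0 (Suc n) =
     (let (p, c) = erw_state a x0 n;
          p' = (if a p (c p) then p + 1 else p - 1)
      in (p', c(p' := Suc (c p'))))"

definition erw :: "(int \<Rightarrow> nat \<Rightarrow> bool) \<Rightarrow> int \<Rightarrow> nat \<Rightarrow> int" where
  "erw a x0 n = fst (erw_state a x0 n)"

end

theory Submission
  imports Defs
begin


definition stp :: "int \<times> (int \<Rightarrow> nat) \<Rightarrow> bool \<Rightarrow> int \<times> (int \<Rightarrow> nat)" where
  "stp s b = (let p' = (if b then fst s + 1 else fst s - 1) in (p', (snd s)(p' := Suc (snd s p'))))"

lemma erw_state_Suc':
  "erw_state a x0 (Suc n) = stp (erw_state a x0 n)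
     (a (fst (erw_state a x0 n)) (snd (erw_state a x0 n) (fst (erw_state a x0 n))))"
  by (simp add: stp_def Let_def split: prod.split)

lemma erw_0[simp]: "erw a x0 0 = x0"
  by (simp add: erw_def)

lemma erw_Suc:
  "erw a x0 (Suc n) = (if a (erw a x0 n) (snd (erw_state a x0 n) (erw a x0 n)) then erw a x0 n + 1 else erw a x0 n - 1)"
  by (simp add: erw_def erw_state_Suc' stp_def Let_def del: erw_state.simps(2))

lemma erw_count:
  "snd (erw_state a x0 n) y = card {j. j \<le> n \<and> erw a x0 j = y}"
proof (induction n)
  case 0
  have "{j. j \<le> (0::nat) \<and> erw a x0 j = y} = (if y = x0 then {0} else {})" by auto
  then show ?case by (simp add: erw_def)
next
  case (Suc n)
  have eq: "{j. j \<le> Suc n \<and> erw a x0 j = y} = {j. j \<le> n \<and> erw a x0 j = y} \<union> (if erw a x0 (Suc n) = y then {Suc n} else {})"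
    by (auto simp: le_Suc_eq)
  have "snd (erw_state a x0 (Suc n)) y = snd (erw_state a x0 n) y + (if erw a x0 (Suc n) = y then 1 else 0)"
    by (simp add: erw_state_Suc' stp_def Let_def erw_def del: erw_state.simps(2))
  also have "\<dots> = card {j. j \<le> Suc n \<and> erw a x0 j = y}"
    unfolding eq Suc by (auto simp: card_insert_if)
  finally show ?case .
qed

lemma count_le: "card {j. j \<le> n \<and> (w::nat\<Rightarrow>int) j = y} \<le> Suc n"
proof -
  have "card {j. j \<le> n \<and> w j = y} \<le> card {..n}" by (rule card_mono) auto
  then show ?thesis by simp
qed

lemma hit_count:
  fixes w :: "nat \<Rightarrow> int"
  assumes inf: "infinite {n. w n = x}" and k: "k \<ge> 1"
  shows "\<exists>n. w n = x \<and> card {j. j \<le> n \<and> w j = x} = k"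
proof -
  define f where "f n = card {j. j \<le> n \<and> w j = x}" for n
  have fS: "f (Suc n) = f n + (if w (Suc n) = x then 1 else 0)" for n
  proof -
    have eq: "{j. j \<le> Suc n \<and> w j = x} = {j. j \<le> n \<and> w j = x} \<union> (if w (Suc n) = x then {Suc n} else {})"
      by (auto simp: le_Suc_eq)
    show ?thesis unfolding f_def eq by (auto simp: card_insert_if)
  qed
  have f0: "f 0 = (if w 0 = x then 1 else 0)"
  proof -
    have "{j. j \<le> (0::nat) \<and> w j = x} = (if w 0 = x then {0} else {})" by auto
    then show ?thesis by (simp add: f_def)
  qed
  have unb: "\<exists>n. f n \<ge> k"
  proof -
    obtain B where B: "B \<subseteq> {n. w n = x}" "finite B" "card B = k"
      using infinite_arbitrarily_large[OF inf] by blast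
    show ?thesis
    proof (cases "B = {}")
      case True then show ?thesis using B k by simp
    next
      case False
      have "B \<subseteq> {j. j \<le> Max B \<and> w j = x}" using B by auto
      then have "card B \<le> f (Max B)" unfolding f_def by (intro card_mono) auto
      then show ?thesis using B by auto
    qed
  qed
  define n where "n = (LEAST n. f n \<ge> k)"
  have n1: "f n \<ge> k" unfolding n_def using unb by (rule LeastI_ex)
  have n2: "m < n \<Longrightarrow> f m < k" for m using not_less_Least[of m "\<lambda>n. f n \<ge> k"] unfolding n_def by auto
  show ?thesis
  proof (cases n)
    case 0
    then have "f n = k \<and> w n = x" using n1 f0 k by (auto split: if_splits)
    then show ?thesis unfolding f_def by blast
  next
    case (Suc n')
    have "f n' < k" using n2 Suc by auto
    then have "f n = k \<and> w n = x" using n1 fS[of n'] Suc k by (auto split: if_splits)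
    then show ?thesis unfolding f_def by blast
  qed
qed

lemma io_left:
  assumes nd: "nondegenerate_seq (a x)"
    and inf: "infinite {n. erw a x0 n = x}"
  shows "infinite {n. erw a x0 n = x - 1}"
  unfolding infinite_nat_iff_unbounded
proof
  fix m
  have "infinite {i. 1 \<le> i \<and> a x i \<noteq> a x (Suc i)}" using nd by (simp add: nondegenerate_seq_def)
  then obtain i where i: "i > m + 1" "1 \<le> i" "a x i \<noteq> a x (Suc i)"
    unfolding infinite_nat_iff_unbounded by blast
  have "\<exists>k. k > m + 1 \<and> k \<ge> 1 \<and> \<not> a x k"
  proof (cases "a x i")
    case True then show ?thesis using i by (intro exI[of _ "Suc i"]) auto
  next
    case False then show ?thesis using i by (intro exI[of _ i]) auto
  qed
  then obtain k where k: "k > m + 1" "k \<ge> 1" "\<not> a x k" by blast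
  obtain n where n: "erw a x0 n = x" "card {j. j \<le> n \<and> erw a x0 j = x} = k"
    using hit_count[OF inf k(2)] by blast
  have "k \<le> Suc n" using n(2) count_le[of n "erw a x0" x] by simp
  moreover have "erw a x0 (Suc n) = x - 1"
    using n k by (simp add: erw_Suc erw_count)
  ultimately show "\<exists>n>m. n \<in> {n. erw a x0 n = x - 1}" using k by (intro exI[of _ "Suc n"]) auto
qed

lemma nonneg_walk:
  assumes "\<forall>n. erw a 0 n \<noteq> -1"
  shows "erw a 0 n \<ge> 0"
proof (induction n)
  case (Suc n)
  then show ?case using assms[rule_format, of "Suc n"] by (auto simp: erw_Suc)
qed simp

lemma nondeg_transient:
  assumes nd: "\<forall>x. nondegenerate_seq (a x)" and nv: "\<forall>n. erw a 0 n \<noteq> -1"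
  shows "filterlim (erw a 0) at_top sequentially"
proof (rule ccontr)
  let ?w = "erw a 0"
  have noio: "finite {n. ?w n = int k}" for k
  proof (induction k)
    case 0
    show ?case
    proof (rule ccontr)
      assume "infinite {n. ?w n = int 0}"
      then have "infinite {n. ?w n = int 0 - 1}" using io_left nd by blast
      then obtain n where "?w n = -1" by (metis (mono_tags, lifting) empty_Collect_eq finite.emptyI of_nat_0 diff_0)
      then show False using nv by blast
    qed
  next
    case (Suc k)
    show ?case
    proof (rule ccontr)
      assume "infinite {n. ?w n = int (Suc k)}"
      then have "infinite {n. ?w n = int (Suc k) - 1}" using io_left nd by blast
      then show False using Suc by simp
    qed
  qed
  assume "\<not> filterlim ?w at_top sequentially"
  then obtain Z where Z: "\<not> eventually (\<lambda>n. Z \<le> ?w n) sequentially"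
    unfolding filterlim_at_top by blast
  have "infinite {n. ?w n < Z}" unfolding infinite_nat_iff_unbounded
  proof
    fix m
    have "\<not> (\<forall>n\<ge>Suc m. Z \<le> ?w n)" using Z by (auto simp: eventually_sequentially)
    then obtain n where "n \<ge> Suc m" "?w n < Z" by (auto simp: not_le)
    then show "\<exists>n>m. n \<in> {n. ?w n < Z}" by (intro exI[of _ n]) auto
  qed
  moreover have "{n. ?w n < Z} \<subseteq> (\<Union>k\<in>{..nat Z}. {n. ?w n = int k})"
  proof
    fix n assume "n \<in> {n. ?w n < Z}"
    then have "?w n < Z" "?w n \<ge> 0" using nonneg_walk[OF nv] by auto
    then show "n \<in> (\<Union>k\<in>{..nat Z}. {n. ?w n = int k})"
      by (intro UN_I[of "nat (?w n)"]) auto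
  qed
  moreover have "finite (\<Union>k\<in>{..nat Z}. {n. ?w n = int k})" using noio by auto
  ultimately show False using finite_subset by blast
qed

lemma erw_state_translate:
  "erw_state (\<lambda>x. a (x + k)) x0 n =
     (fst (erw_state a (x0 + k) n) - k, \<lambda>y. snd (erw_state a (x0 + k) n) (y + k))"
proof (induction n)
  case 0
  then show ?case by (auto simp: fun_eq_iff)
next
  case (Suc n)
  show ?case
    unfolding erw_state_Suc'[of "\<lambda>x. a (x + k)"] erw_state_Suc'[of a] Suc
    by (auto simp: stp_def Let_def fun_eq_iff)
qed

lemma erw_translate: "erw (\<lambda>x. a (x + k)) x0 n = erw a (x0 + k) n - k"
  by (simp add: erw_def erw_state_translate del: erw_state.simps)

lemma count_pos: "snd (erw_state a x0 n) (fst (erw_state a x0 n)) \<ge> 1"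
proof -
  have "n \<in> {j. j \<le> n \<and> erw a x0 j = erw a x0 n}" by simp
  then have "card {j. j \<le> n \<and> erw a x0 j = erw a x0 n} > 0"
    by (intro card_gt_0_iff[THEN iffD2]) (auto intro: finite_subset[of _ "{..n}"])
  then show ?thesis using erw_count[of a x0 n "erw a x0 n"] by (simp add: erw_def)
qed

lemma surgery:
  fixes m :: int and K :: nat
  assumes m: "m \<le> 0"
    and stay: "\<forall>n. m \<le> erw a0 0 n"
    and cnt: "\<forall>n x. x < 0 \<longrightarrow> snd (erw_state a0 0 n) x \<le> K"
    and a1: "\<forall>x. m \<le> x \<and> x < 0 \<longrightarrow> a' x 1"
    and a2: "\<forall>x j. m \<le> x \<and> x < 0 \<and> 1 \<le> j \<and> j \<le> K \<longrightarrow> a' x (Suc j) = a0 x j"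
    and a3: "\<forall>x k. \<not> (m \<le> x \<and> x < 0) \<longrightarrow> a' x k = a0 x k"
  shows "m \<le> erw a' m n"
proof -
  define d where "d = nat (- m)"
  have c1: "n \<le> d \<Longrightarrow> erw_state a' m n = (m + int n, \<lambda>y. if m \<le> y \<and> y \<le> m + int n then 1 else 0)" for n
  proof (induction n)
    case 0
    then show ?case by (auto simp: fun_eq_iff)
  next
    case (Suc n)
    then have IH: "erw_state a' m n = (m + int n, \<lambda>y. if m \<le> y \<and> y \<le> m + int n then 1 else 0)" by simp
    have "m + int n < 0" using Suc.prems unfolding d_def by simp
    then have "a' (m + int n) 1" using a1 by simp
    then show ?case unfolding erw_state_Suc'[of a'] IH
      by (auto simp: stp_def Let_def fun_eq_iff)
  qed
  have c2: "erw_state a' m (d + n) = (fst (erw_state a0 0 n),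
      \<lambda>y. snd (erw_state a0 0 n) y + (if m \<le> y \<and> y < 0 then 1 else 0))" for n
  proof (induction n)
    case 0
    have "m + int d = 0" using m unfolding d_def by simp
    then show ?case using c1[of d] by (auto simp: fun_eq_iff)
  next
    case (Suc n)
    define p where "p = fst (erw_state a0 0 n)"
    define c where "c = snd (erw_state a0 0 n)"
    have cp: "c p \<ge> 1" using count_pos[of a0 0 n] unfolding p_def c_def .
    have arr: "a' p (c p + (if m \<le> p \<and> p < 0 then 1 else 0)) = a0 p (c p)"
    proof (cases "m \<le> p \<and> p < 0")
      case True
      have "c p \<le> K" using cnt True unfolding c_def p_def by auto
      then show ?thesis using True a2 cp by simp
    next
      case False
      have "a' p (c p) = a0 p (c p)" using a3 False by blast
      then show ?thesis using False by auto
    qed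
    have "erw_state a0 0 n = (p, c)" by (simp add: p_def c_def)
    then show ?case
      unfolding add_Suc_right erw_state_Suc'[of a'] erw_state_Suc'[of a0] Suc
      using arr by (auto simp: stp_def Let_def fun_eq_iff)
  qed
  show ?thesis
  proof (cases "n \<le> d")
    case True
    then show ?thesis using c1[of n] by (simp add: erw_def)
  next
    case False
    then obtain k where "n = d + k" by (metis le_add_diff_inverse nat_le_linear)
    then show ?thesis using c2[of k] stay by (simp add: erw_def)
  qed
qed

lemma transient_bounds:
  assumes "filterlim (erw a 0) at_top sequentially"
  shows "\<exists>m K. m \<le> 0 \<and> (\<forall>n. m \<le> erw a 0 n) \<and> (\<forall>n x. x < 0 \<longrightarrow> snd (erw_state a 0 n) x \<le> K)"
proof -
  obtain N where N: "\<forall>n\<ge>N. 0 \<le> erw a 0 n"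
    using assms unfolding filterlim_at_top eventually_sequentially by blast
  define m where "m = min 0 (Min (erw a 0 ` {..N}))"
  have "m \<le> erw a 0 n" for n
  proof (cases "n \<le> N")
    case True
    then have "Min (erw a 0 ` {..N}) \<le> erw a 0 n" by (intro Min_le) auto
    then show ?thesis unfolding m_def by simp
  next
    case False then show ?thesis using N unfolding m_def by (meson min.coboundedI1 nat_le_linear order_trans)
  qed
  moreover have "snd (erw_state a 0 n) x \<le> N" if "x < 0" for n x
  proof -
    have "{j. j \<le> n \<and> erw a 0 j = x} \<subseteq> {..<N}"
      using N that by (auto simp: not_less[symmetric])
    then have "card {j. j \<le> n \<and> erw a 0 j = x} \<le> card {..<N}" by (intro card_mono) auto
    then show ?thesis by (simp add: erw_count)
  qed
  ultimately show ?thesis unfolding m_def by (intro exI[of _ m] exI[of _ N]) (auto simp: m_def)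
qed

definition reach :: "int \<Rightarrow> nat \<Rightarrow> (int \<times> (int \<Rightarrow> nat)) set" where
  "reach x0 n = range (\<lambda>a. erw_state a x0 n)"

lemma finite_reach: "finite (reach x0 n)"
proof (induction n)
  case 0
  have "reach x0 0 = {(x0, (\<lambda>_. 0)(x0 := 1))}" by (auto simp: reach_def)
  then show ?case by simp
next
  case (Suc n)
  have "erw_state a x0 (Suc n) \<in> (\<lambda>(s, b). stp s b) ` (reach x0 n \<times> UNIV)" for a
    unfolding erw_state_Suc'
    by (intro image_eqI[of _ _ "(erw_state a x0 n, a (fst (erw_state a x0 n)) (snd (erw_state a x0 n) (fst (erw_state a x0 n))))"])
      (auto simp: reach_def simp del: erw_state.simps)
  then have "reach x0 (Suc n) \<subseteq> (\<lambda>(s, b). stp s b) ` (reach x0 n \<times> UNIV)"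
    unfolding reach_def[of x0 "Suc n"] by blast
  moreover have "finite ((\<lambda>(s, b). stp s b) ` (reach x0 n \<times> (UNIV :: bool set)))"
    using Suc by auto
  ultimately show ?case by (rule finite_subset)
qed



abbreviation Um :: "real measure" where "Um \<equiv> uniform_measure lborel {0..1::real}"

lemma prob_Um: "prob_space Um"
  by (rule prob_space_uniform_measure) auto

lemma prob_U: "prob_space unif_space"
  unfolding unif_space_def by (rule prob_space_PiM) (rule prob_Um)

lemma space_Um[simp]: "space Um = UNIV" by simp

lemma space_U[simp]: "space unif_space = UNIV"
  by (simp add: unif_space_def space_PiM)

lemma sets_Um[simp]: "sets Um = sets borel" by simp

lemma unif_split:
  assumes Q: "Q \<in> sets unif_space" and inv: "\<forall>u t. u \<in> Q \<longleftrightarrow> u(s := t) \<in> Q"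
    and A: "A \<in> sets borel"
  shows "emeasure unif_space (Q \<inter> {u. u s \<in> A}) = emeasure Um A * emeasure unif_space Q"
proof -
  define I where "I = UNIV - {s}"
  define P where "P = (\<Pi>\<^sub>M i\<in>I. Um)"
  interpret P: prob_space P unfolding P_def by (rule prob_space_PiM) (rule prob_Um)
  have insI: "insert s I = UNIV" unfolding I_def by auto
  have dist0: "distr (Um \<Otimes>\<^sub>M P) (\<Pi>\<^sub>M i\<in>insert s I. Um) (\<lambda>(x, X). X(s := x)) = (\<Pi>\<^sub>M i\<in>insert s I. Um)"
    unfolding P_def by (rule distr_pair_PiM_eq_PiM) (rule prob_Um)+
  then have dist: "distr (Um \<Otimes>\<^sub>M P) unif_space (\<lambda>(x, X). X(s := x)) = unif_space"
    unfolding insI unif_space_def .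
  have "(\<lambda>p. (snd p)(s := fst p)) \<in> measurable (Um \<Otimes>\<^sub>M P) unif_space"
    unfolding unif_space_def P_def by (rule measurable_fun_upd[where J=I]) (auto simp: I_def)
  moreover have "(\<lambda>(x, X). X(s := x)) = (\<lambda>p. (snd p)(s := fst p))" by auto
  ultimately have g: "(\<lambda>(x, X). X(s := x)) \<in> measurable (Um \<Otimes>\<^sub>M P) unif_space" by simp
  have h: "(\<lambda>X. X(s := 0::real)) \<in> measurable P unif_space"
    unfolding unif_space_def P_def
    by (rule measurable_fun_upd[where J=I]) (auto simp: I_def)
  define Q' where "Q' = (\<lambda>X. X(s := 0::real)) -` Q \<inter> space P"
  have Q': "Q' \<in> sets P" unfolding Q'_def using h Q by (rule measurable_sets)
  have gen: "emeasure unif_space (Q \<inter> {u. u s \<in> B}) = emeasure Um B * emeasure P Q'"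
    if B: "B \<in> sets borel" for B
  proof -
    have sB: "Q \<inter> {u. u s \<in> B} \<in> sets unif_space"
    proof -
      have "(\<lambda>u. u s) \<in> measurable unif_space Um"
        unfolding unif_space_def by (rule measurable_component_singleton) simp
      then have "(\<lambda>u. u s) -` B \<inter> space unif_space \<in> sets unif_space"
        using B by (intro measurable_sets[of _ unif_space Um]) auto
      then have "{u. u s \<in> B} \<in> sets unif_space" by (simp add: vimage_def)
      then show ?thesis using Q by (rule sets.Int[rotated])
    qed
    have "emeasure unif_space (Q \<inter> {u. u s \<in> B}) =
        emeasure (Um \<Otimes>\<^sub>M P) ((\<lambda>(x, X). X(s := x)) -` (Q \<inter> {u. u s \<in> B}) \<inter> space (Um \<Otimes>\<^sub>M P))"
      by (subst dist[symmetric], subst emeasure_distr[OF g sB]) simp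
    also have "(\<lambda>(x, X). X(s := x)) -` (Q \<inter> {u. u s \<in> B}) \<inter> space (Um \<Otimes>\<^sub>M P) = B \<times> Q'"
    proof -
      have "X(s := x) \<in> Q \<longleftrightarrow> X(s := 0) \<in> Q" for X x
        using inv[rule_format, of "X(s := x)" 0] by simp
      then show ?thesis unfolding Q'_def by (auto simp: space_pair_measure; metis)
    qed
    also have "emeasure (Um \<Otimes>\<^sub>M P) (B \<times> Q') = emeasure Um B * emeasure P Q'"
      using B Q' by (intro P.emeasure_pair_measure_Times) auto
    finally show ?thesis .
  qed
  have "emeasure unif_space Q = emeasure Um UNIV * emeasure P Q'"
    using gen[of UNIV] by simp
  also have "emeasure Um UNIV = 1"
    using prob_space.emeasure_space_1[OF prob_Um] by simp
  finally show ?thesis using gen[OF A] by simp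
qed

lemma sets_coord: "B \<in> sets borel \<Longrightarrow> {u. u s \<in> B} \<in> sets unif_space"
proof -
  assume B: "B \<in> sets borel"
  have "(\<lambda>u. u s) \<in> measurable unif_space Um"
    unfolding unif_space_def by (rule measurable_component_singleton) simp
  then have "(\<lambda>u. u s) -` B \<inter> space unif_space \<in> sets unif_space"
    using B by (intro measurable_sets[of _ unif_space Um]) auto
  then show ?thesis by (simp add: vimage_def)
qed

lemma unif_split_finite:
  assumes "finite S" and Q: "Q \<in> sets unif_space"
    and inv: "\<forall>u s t. s \<in> S \<longrightarrow> (u \<in> Q \<longleftrightarrow> u(s := t) \<in> Q)"
    and A: "\<forall>s\<in>S. A s \<in> sets borel"
  shows "emeasure unif_space (Q \<inter> {u. \<forall>s\<in>S. u s \<in> A s}) = (\<Prod>s\<in>S. emeasure Um (A s)) * emeasure unif_space Q"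
  using assms(1) inv A
proof (induction S rule: finite_induct)
  case empty
  then show ?case by simp
next
  case (insert s S)
  define Q1 where "Q1 = Q \<inter> {u. \<forall>s\<in>S. u s \<in> A s}"
  have "{u. \<forall>s\<in>S. u s \<in> A s} = {u \<in> space unif_space. \<forall>s\<in>S. u s \<in> A s}" by simp
  also have "\<dots> \<in> sets unif_space"
    using insert by (intro sets.sets_Collect_finite_All) (auto intro: sets_coord)
  finally have Q1: "Q1 \<in> sets unif_space" unfolding Q1_def using Q by (intro sets.Int)
  have inv1: "\<forall>u t. u \<in> Q1 \<longleftrightarrow> u(s := t) \<in> Q1"
  proof (intro allI)
    fix u t
    have "u \<in> Q \<longleftrightarrow> u(s := t) \<in> Q" using insert.prems(1)[rule_format, of s u t] by simp
    moreover have "(\<forall>s'\<in>S. (u(s := t)) s' \<in> A s') \<longleftrightarrow> (\<forall>s'\<in>S. u s' \<in> A s')"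
      using insert.hyps(2) by auto
    ultimately show "u \<in> Q1 \<longleftrightarrow> u(s := t) \<in> Q1" unfolding Q1_def by auto
  qed
  have eq: "Q \<inter> {u. \<forall>s\<in>insert s S. u s \<in> A s} = Q1 \<inter> {u. u s \<in> A s}"
    unfolding Q1_def by auto
  have IH: "emeasure unif_space Q1 = (\<Prod>s\<in>S. emeasure Um (A s)) * emeasure unif_space Q"
    unfolding Q1_def using insert.IH insert.prems by auto
  have As: "A s \<in> sets borel" using insert.prems by auto
  show ?case
    unfolding eq unif_split[OF Q1 inv1 As] IH prod.insert[OF insert.hyps]
    by (simp only: mult.assoc)
qed

lemma Um_pos:
  assumes "0 < c" "c < 1"
  shows "emeasure Um {..<c} > 0" "emeasure Um {c..} > 0"
proof -
  have "{0..1} \<inter> {..<c} = {0..<c}" "{0..1} \<inter> {c..} = {c..1::real}" using assms by auto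
  then show "emeasure Um {..<c} > 0" "emeasure Um {c..} > 0"
    using assms by (simp_all add: ennreal_zero_less_divide)
qed

lemma measurable_env_comp:
  assumes "sets \<mu> = sets env_space"
  shows "(\<lambda>\<omega>. \<omega> s) \<in> borel_measurable \<mu>"
proof -
  have "(\<lambda>\<omega>. \<omega> s) \<in> borel_measurable env_space"
    unfolding env_space_def by (rule measurable_component_singleton) simp
  then show ?thesis using measurable_cong_sets[OF assms refl] by blast
qed

lemma measurable_joint_comp:
  assumes "sets \<mu> = sets env_space"
  shows "(\<lambda>p. fst p s) \<in> borel_measurable (joint_space \<mu>)"
    "(\<lambda>p. snd p s) \<in> borel_measurable (joint_space \<mu>)"
proof -
  have "(\<lambda>u. u s) \<in> measurable unif_space Um"
    unfolding unif_space_def by (rule measurable_component_singleton) simp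
  then have u: "(\<lambda>u. u s) \<in> borel_measurable unif_space"
    using measurable_cong_sets[OF refl sets_Um] by blast
  show "(\<lambda>p. fst p s) \<in> borel_measurable (joint_space \<mu>)"
    unfolding joint_space_def
    by (rule measurable_compose[OF measurable_fst measurable_env_comp[OF assms]])
  show "(\<lambda>p. snd p s) \<in> borel_measurable (joint_space \<mu>)"
    unfolding joint_space_def
    by (rule measurable_compose[OF measurable_snd u])
qed

lemma sets_C:
  assumes "sets \<mu> = sets env_space" "finite S"
  shows "{p \<in> space (joint_space \<mu>). \<forall>s\<in>S. (snd p s < fst p s) = b s} \<in> sets (joint_space \<mu>)"
proof (intro sets.sets_Collect_finite_All assms(2))
  fix s
  have L: "{p \<in> space (joint_space \<mu>). snd p s < fst p s} \<in> sets (joint_space \<mu>)"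
    by (rule borel_measurable_less[OF measurable_joint_comp(2)[OF assms(1)] measurable_joint_comp(1)[OF assms(1)]])
  show "{p \<in> space (joint_space \<mu>). (snd p s < fst p s) = b s} \<in> sets (joint_space \<mu>)"
    by (cases "b s") (use sets.sets_Collect_neg[OF L] L in auto)
qed

lemma prod_ennreal_nz: "finite T \<Longrightarrow> (\<And>s. s \<in> T \<Longrightarrow> f s \<noteq> (0::ennreal)) \<Longrightarrow> prod f T \<noteq> 0"
  by (induction T rule: finite_induct) auto

lemma pos_transfer:
  fixes \<mu> :: "cookie_env measure"
  assumes p\<mu>: "prob_space \<mu>" and s\<mu>: "sets \<mu> = sets env_space"
    and fin: "finite S"
    and ell: "AE \<omega> in \<mu>. \<forall>s\<in>S. 0 < \<omega> s \<and> \<omega> s < 1"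
    and R: "R \<in> sets (joint_space \<mu>)"
    and inv: "\<forall>\<omega> u s t. s \<in> S \<longrightarrow> ((\<omega>, u) \<in> R \<longleftrightarrow> (\<omega>, u(s := t)) \<in> R)"
    and pos: "emeasure (joint_space \<mu>) R > 0"
  shows "emeasure (joint_space \<mu>) (R \<inter> {p. \<forall>s\<in>S. (snd p s < fst p s) = b s}) > 0"
proof -
  interpret U: prob_space unif_space by (rule prob_U)
  define C where "C = {p \<in> space (joint_space \<mu>). \<forall>s\<in>S. (snd p s < fst p s) = b s}"
  have RC_eq: "R \<inter> {p. \<forall>s\<in>S. (snd p s < fst p s) = b s} = R \<inter> C"
    using sets.sets_into_space[OF R] unfolding C_def by auto
  have RC: "R \<inter> C \<in> sets (joint_space \<mu>)"
    using R sets_C[OF s\<mu> fin, of b] unfolding C_def by (intro sets.Int)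
  define f1 where "f1 \<omega> = emeasure unif_space (Pair \<omega> -` R)" for \<omega>
  define f2 where "f2 \<omega> = emeasure unif_space (Pair \<omega> -` (R \<inter> C))" for \<omega>
  have R': "R \<in> sets (\<mu> \<Otimes>\<^sub>M unif_space)" using R by (simp add: joint_space_def)
  have RC': "R \<inter> C \<in> sets (\<mu> \<Otimes>\<^sub>M unif_space)" using RC by (simp add: joint_space_def)
  have m1: "f1 \<in> borel_measurable \<mu>" unfolding f1_def by (rule U.measurable_emeasure_Pair[OF R'])
  have m2: "f2 \<in> borel_measurable \<mu>" unfolding f2_def by (rule U.measurable_emeasure_Pair[OF RC'])
  have e1: "emeasure (joint_space \<mu>) R = integral\<^sup>N \<mu> f1"
    unfolding joint_space_def f1_def by (rule U.emeasure_pair_measure_alt[OF R'])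
  have e2: "emeasure (joint_space \<mu>) (R \<inter> C) = integral\<^sup>N \<mu> f2"
    unfolding joint_space_def f2_def by (rule U.emeasure_pair_measure_alt[OF RC'])
  have notAE1: "\<not> (AE \<omega> in \<mu>. f1 \<omega> = 0)"
    using pos e1 nn_integral_0_iff_AE[OF m1] by auto
  have imp: "AE \<omega> in \<mu>. f2 \<omega> = 0 \<longrightarrow> f1 \<omega> = 0"
    using ell
  proof (rule AE_mp, intro AE_I2 impI)
    fix \<omega> assume \<omega>: "\<omega> \<in> space \<mu>" and e: "\<forall>s\<in>S. 0 < \<omega> s \<and> \<omega> s < 1" and z: "f2 \<omega> = 0"
    define A where "A s = (if b s then {..<\<omega> s} else {\<omega> s..})" for s
    have Rw: "Pair \<omega> -` R \<in> sets unif_space" by (rule sets_Pair1[OF R'])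
    have invw: "\<forall>u s t. s \<in> S \<longrightarrow> (u \<in> Pair \<omega> -` R \<longleftrightarrow> u(s := t) \<in> Pair \<omega> -` R)"
      using inv by simp
    have sl: "Pair \<omega> -` (R \<inter> C) = Pair \<omega> -` R \<inter> {u. \<forall>s\<in>S. u s \<in> A s}"
      using \<omega> unfolding C_def A_def by (auto simp: joint_space_def space_pair_measure not_less)
    have eq2: "f2 \<omega> = (\<Prod>s\<in>S. emeasure Um (A s)) * f1 \<omega>"
      unfolding f2_def f1_def sl
      by (rule unif_split_finite[OF fin Rw invw]) (auto simp: A_def)
    have nz: "emeasure Um (A s) \<noteq> 0" if "s \<in> S" for s
    proof -
      have "0 < \<omega> s" "\<omega> s < 1" using e that by auto
      from Um_pos[OF this] show ?thesis unfolding A_def by (cases "b s") (auto simp del: emeasure_uniform_measure)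
    qed
    have "(\<Prod>s\<in>S. emeasure Um (A s)) \<noteq> 0"
      using fin nz by (rule prod_ennreal_nz)
    then show "f1 \<omega> = 0" using z eq2 by (metis mult_eq_0_iff)
  qed
  have "\<not> (AE \<omega> in \<mu>. f2 \<omega> = 0)"
  proof
    assume "AE \<omega> in \<mu>. f2 \<omega> = 0"
    with imp have "AE \<omega> in \<mu>. f1 \<omega> = 0" by eventually_elim blast
    with notAE1 show False by blast
  qed
  then have "integral\<^sup>N \<mu> f2 \<noteq> 0" using nn_integral_0_iff_AE[OF m2] by auto
  then show ?thesis unfolding RC_eq e2 by (simp add: zero_less_iff_neq_zero)
qed



lemma bit_set:
  assumes B: "{p \<in> space M. B p} \<in> sets M"
  shows "{p \<in> space M. Q (B p)} \<in> sets M"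
proof -
  have eq: "Q (B p) = (if B p then Q True else Q False)" for p by (cases "B p") auto
  have N: "{p \<in> space M. \<not> B p} \<in> sets M" using sets.sets_Collect_neg[OF B] .
  show ?thesis
  proof (cases "Q True"; cases "Q False")
    assume "Q True" "Q False"
    then have "{p \<in> space M. Q (B p)} = space M" unfolding eq by auto
    then show ?thesis by simp
  next
    assume "Q True" "\<not> Q False"
    then have "{p \<in> space M. Q (B p)} = {p \<in> space M. B p}" unfolding eq by auto
    then show ?thesis using B by simp
  next
    assume "\<not> Q True" "Q False"
    then have "{p \<in> space M. Q (B p)} = {p \<in> space M. \<not> B p}" unfolding eq by auto
    then show ?thesis using N by simp
  next
    assume "\<not> Q True" "\<not> Q False"
    then have "{p \<in> space M. Q (B p)} = {}" unfolding eq by auto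
    then show ?thesis by (metis sets.empty_sets)
  qed
qed

lemma meas_state:
  assumes A: "\<And>x k. {p \<in> space M. A p x k} \<in> sets M"
  shows "{p \<in> space M. P (erw_state (A p) x0 n)} \<in> sets M"
proof (induction n arbitrary: P)
  case 0
  show ?case by (cases "P (x0, (\<lambda>_. 0)(x0 := 1))") auto
next
  case (Suc n)
  have eq: "{p \<in> space M. P (erw_state (A p) x0 (Suc n))} =
     (\<Union>r\<in>reach x0 n. {p \<in> space M. erw_state (A p) x0 n = r} \<inter>
        {p \<in> space M. P (stp r (A p (fst r) (snd r (fst r))))})"
  proof (intro set_eqI iffI)
    fix p assume p: "p \<in> {p \<in> space M. P (erw_state (A p) x0 (Suc n))}"
    show "p \<in> (\<Union>r\<in>reach x0 n. {p \<in> space M. erw_state (A p) x0 n = r} \<inter>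
        {p \<in> space M. P (stp r (A p (fst r) (snd r (fst r))))})"
      using p by (intro UN_I[of "erw_state (A p) x0 n"]) (auto simp: reach_def erw_state_Suc' simp del: erw_state.simps)
  qed (auto simp: erw_state_Suc' simp del: erw_state.simps)
  show ?case unfolding eq
    by (intro sets.finite_UN finite_reach ballI sets.Int Suc bit_set[OF A])
qed

lemma meas_state_all:
  assumes A: "\<And>x k. {p \<in> space M. A p x k} \<in> sets M"
  shows "{p \<in> space M. \<forall>n. P n (erw_state (A p) x0 n)} \<in> sets M"
  by (intro sets.sets_Collect_countable_All meas_state[OF A])

lemma meas_transient:
  assumes A: "\<And>x k. {p \<in> space M. A p x k} \<in> sets M"
  shows "{p \<in> space M. filterlim (erw (A p) x0) at_top sequentially} \<in> sets M"
proof -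
  have eq: "filterlim (erw a x0) at_top sequentially \<longleftrightarrow>
      (\<forall>Z::int. \<exists>N::nat. \<forall>n. (\<lambda>s. N \<le> n \<longrightarrow> Z \<le> fst s) (erw_state a x0 n))" for a
    unfolding filterlim_at_top eventually_sequentially erw_def by simp
  show ?thesis unfolding eq
    by (intro sets.sets_Collect_countable_All sets.sets_Collect_countable_Ex meas_state[OF A])
qed

lemma shift_meas_U: "shift_env \<in> measurable unif_space unif_space"
  unfolding unif_space_def
proof (rule measurable_PiM_single')
  fix i :: "int \<times> nat"
  have "(\<lambda>u. u (fst i + 1, snd i)) \<in> measurable (\<Pi>\<^sub>M i\<in>UNIV. Um) Um"
    by (rule measurable_component_singleton) simp
  moreover have "(\<lambda>\<omega>. shift_env \<omega> i) = (\<lambda>u. u (fst i + 1, snd i))"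
    by (auto simp: shift_env_def split: prod.split)
  ultimately show "(\<lambda>\<omega>. shift_env \<omega> i) \<in> measurable (\<Pi>\<^sub>M i\<in>UNIV. Um) Um" by simp
qed (auto simp: space_PiM)

lemma shift_distr_U: "distr unif_space unif_space shift_env = unif_space"
proof -
  define f :: "int \<times> nat \<Rightarrow> int \<times> nat" where "f = (\<lambda>(x, n). (x + 1, n))"
  have "inj_on f UNIV" unfolding f_def by (auto simp: inj_on_def)
  from distr_PiM_reindex[of UNIV "\<lambda>_. Um" f UNIV, OF prob_Um this]
  have "distr (\<Pi>\<^sub>M i\<in>UNIV. Um) (\<Pi>\<^sub>M i\<in>UNIV. Um) (\<lambda>\<omega>. \<lambda>n\<in>UNIV. \<omega> (f n)) = (\<Pi>\<^sub>M i\<in>UNIV. Um)"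
    by simp
  moreover have "(\<lambda>\<omega>. \<lambda>n\<in>UNIV. \<omega> (f n)) = shift_env"
    by (auto simp: f_def shift_env_def fun_eq_iff)
  ultimately show ?thesis unfolding unif_space_def by simp
qed

definition Th :: "cookie_env \<times> (int \<times> nat \<Rightarrow> real) \<Rightarrow> cookie_env \<times> (int \<times> nat \<Rightarrow> real)" where
  "Th p = (shift_env (fst p), shift_env (snd p))"

lemma Th_meas:
  assumes "stationary_ergodic \<mu>"
  shows "Th \<in> measurable (joint_space \<mu>) (joint_space \<mu>)"
proof -
  have s: "shift_env \<in> measurable \<mu> \<mu>" using assms by (simp add: stationary_ergodic_def)
  show ?thesis unfolding Th_def joint_space_def
    by (intro measurable_Pair measurable_compose[OF measurable_fst s]
        measurable_compose[OF measurable_snd shift_meas_U])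
qed

lemma Th_distr:
  assumes "stationary_ergodic \<mu>"
  shows "distr (joint_space \<mu>) (joint_space \<mu>) Th = joint_space \<mu>"
proof -
  have s: "shift_env \<in> measurable \<mu> \<mu>" and d: "distr \<mu> \<mu> shift_env = \<mu>"
    using assms by (simp_all add: stationary_ergodic_def)
  interpret U: prob_space unif_space by (rule prob_U)
  have sf: "sigma_finite_measure (distr unif_space unif_space shift_env)"
    unfolding shift_distr_U by unfold_locales
  have "distr \<mu> \<mu> shift_env \<Otimes>\<^sub>M distr unif_space unif_space shift_env =
      distr (\<mu> \<Otimes>\<^sub>M unif_space) (\<mu> \<Otimes>\<^sub>M unif_space) (\<lambda>(x, y). (shift_env x, shift_env y))"
    by (rule pair_measure_distr[OF s shift_meas_U sf])
  moreover have "(\<lambda>(x, y). (shift_env x, shift_env y)) = Th" by (auto simp: Th_def fun_eq_iff)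
  ultimately show ?thesis unfolding joint_space_def d shift_distr_U by simp
qed

lemma Thn_meas:
  assumes "stationary_ergodic \<mu>"
  shows "(Th ^^ d) \<in> measurable (joint_space \<mu>) (joint_space \<mu>)"
  by (induction d) (auto intro: measurable_compose[OF _ Th_meas[OF assms]])

lemma Thn_distr:
  assumes "stationary_ergodic \<mu>"
  shows "distr (joint_space \<mu>) (joint_space \<mu>) (Th ^^ d) = joint_space \<mu>"
proof (induction d)
  case 0
  then show ?case by (simp add: distr_id2[symmetric] id_def)
next
  case (Suc d)
  have "distr (joint_space \<mu>) (joint_space \<mu>) (Th ^^ Suc d) =
      distr (distr (joint_space \<mu>) (joint_space \<mu>) (Th ^^ d)) (joint_space \<mu>) Th"
    by (simp add: distr_distr[OF Th_meas[OF assms] Thn_meas[OF assms]])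
  then show ?case using Suc Th_distr[OF assms] by (simp add: comp_def)
qed

lemma Thn_eq: "(Th ^^ d) p = (\<lambda>(x, n). fst p (x + int d, n), \<lambda>(x, n). snd p (x + int d, n))"
  by (induction d) (auto simp: Th_def shift_env_def fun_eq_iff algebra_simps)

lemma arrows_Thn:
  "arrows (fst ((Th ^^ d) p)) (snd ((Th ^^ d) p)) = (\<lambda>x. arrows (fst p) (snd p) (x + int d))"
  by (auto simp: Thn_eq arrows_def fun_eq_iff)



lemma bitJ:
  assumes "sets \<mu> = sets env_space"
  shows "{p \<in> space (joint_space \<mu>). arrows (fst p) (snd p) x k} \<in> sets (joint_space \<mu>)"
  unfolding arrows_def
  by (rule borel_measurable_less[OF measurable_joint_comp(2)[OF assms] measurable_joint_comp(1)[OF assms]])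

lemma space_joint: "space (joint_space \<mu>) = space \<mu> \<times> UNIV"
  by (simp add: joint_space_def space_pair_measure)

theorem corollary3p9:
  fixes \<mu> :: "cookie_env measure"
  assumes "prob_space \<mu>"
    and "sets \<mu> = sets env_space"
    and "AE \<omega> in \<mu>. \<forall>x n. 0 \<le> \<omega> (x, n) \<and> \<omega> (x, n) \<le> 1"
    and "stationary_ergodic \<mu>"
    and "elliptic \<mu>"
    and "nondegenerate \<mu>"
  shows "measure (joint_space \<mu>)
           {p \<in> space (joint_space \<mu>). \<forall>n. erw (arrows (fst p) (snd p)) 0 n \<noteq> -1} > 0
     \<longleftrightarrow> measure (joint_space \<mu>)
           {p \<in> space (joint_space \<mu>). filterlim (erw (arrows (fst p) (snd p)) 0) at_top sequentially} > 0"
proof -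
  note p\<mu> = assms(1) and s\<mu> = assms(2) and st = assms(4)
  define J where "J = joint_space \<mu>"
  interpret J: prob_space J unfolding J_def joint_space_def
    by (rule prob_space_pair[OF p\<mu> prob_U])
  define arr where "arr p = arrows (fst p) (snd p)" for p
  have bit: "\<And>x k. {p \<in> space J. arr p x k} \<in> sets J"
    unfolding J_def arr_def by (rule bitJ[OF s\<mu>])
  define T0 where "T0 = {p \<in> space J. \<forall>n. erw (arr p) 0 n \<noteq> -1}"
  define Ap where "Ap = {p \<in> space J. filterlim (erw (arr p) 0) at_top sequentially}"
  have T0s: "T0 \<in> sets J" unfolding T0_def erw_def
    by (rule meas_state_all[OF bit, of "\<lambda>n s. fst s \<noteq> -1"])
  have Aps: "Ap \<in> sets J" unfolding Ap_def by (rule meas_transient[OF bit])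
  have "measure J T0 > 0 \<longleftrightarrow> measure J Ap > 0"
  proof
    assume pos: "measure J T0 > 0"
    have "AE p in J. \<forall>x. nondegenerate_seq (arr p x)"
      using assms(6) unfolding nondegenerate_def J_def arr_def by simp
    then have "AE p in J. p \<in> T0 \<longrightarrow> p \<in> Ap"
      by eventually_elim (auto simp: T0_def Ap_def intro: nondeg_transient)
    then have "measure J T0 \<le> measure J Ap" using Aps by (rule J.finite_measure_mono_AE)
    then show "measure J Ap > 0" using pos by simp
  next
    assume pos: "measure J Ap > 0"
    define P where "P m K s = (m \<le> fst s \<and> (\<forall>x<0. snd s x \<le> K))"
      for m :: int and K :: nat and s :: "int \<times> (int \<Rightarrow> nat)"
    define E where "E m K = {p \<in> space J. \<forall>n. P m K (erw_state (arr p) 0 n)}" for m K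
    have Es: "E m K \<in> sets J" for m K unfolding E_def by (rule meas_state_all[OF bit])
    have "\<exists>m K. m \<le> 0 \<and> emeasure J (E m K) > 0"
    proof (rule ccontr)
      assume neg: "\<not> ?thesis"
      have null: "E m K \<in> null_sets J" if "m \<le> 0" for m K
      proof -
        have "\<not> 0 < emeasure J (E m K)" using neg that by blast
        then have "emeasure J (E m K) = 0" by (simp only: not_gr_zero)
        then show ?thesis using Es by (intro null_setsI)
      qed
      have "AE p in J. \<forall>mK::int \<times> nat. fst mK \<le> 0 \<longrightarrow> p \<notin> E (fst mK) (snd mK)"
      proof (subst AE_all_countable, intro allI)
        fix mK :: "int \<times> nat"
        show "AE p in J. fst mK \<le> 0 \<longrightarrow> p \<notin> E (fst mK) (snd mK)"
        proof (cases "fst mK \<le> 0")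
          case True
          have "AE p in J. p \<notin> E (fst mK) (snd mK)" by (rule AE_not_in[OF null[OF True]])
          then show ?thesis by eventually_elim simp
        qed simp
      qed
      then have "AE p in J. p \<in> Ap \<longrightarrow> p \<in> {}"
      proof eventually_elim
        case (elim p)
        show ?case
        proof
          assume "p \<in> Ap"
          then have sp: "p \<in> space J" and tr: "filterlim (erw (arr p) 0) at_top sequentially"
            unfolding Ap_def by auto
          obtain m K where mK: "m \<le> 0" "\<forall>n. m \<le> erw (arr p) 0 n"
            "\<forall>n x. x < 0 \<longrightarrow> snd (erw_state (arr p) 0 n) x \<le> K"
            using transient_bounds[OF tr] by blast
          have "p \<in> E m K" using sp mK unfolding E_def P_def erw_def by auto
          then show "p \<in> {}" using elim[rule_format, of "(m, K)"] mK by simp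
        qed
      qed
      then have "measure J Ap \<le> measure J {}" by (rule J.finite_measure_mono_AE) simp
      then show False using pos by simp
    qed
    then obtain m K where m: "m \<le> 0" and Epos: "emeasure J (E m K) > 0" by blast
    define S where "S = {(x, k). m \<le> x \<and> x < 0 \<and> 1 \<le> k \<and> k \<le> Suc K}"
    have finS: "finite S"
      by (rule finite_subset[of _ "{m..<0} \<times> {1..Suc K}"]) (auto simp: S_def)
    define C where "C b = {p \<in> space J. \<forall>s\<in>S. (snd p s < fst p s) = b s}" for b
    have Cs: "C b \<in> sets J" for b unfolding C_def J_def by (rule sets_C[OF s\<mu> finS])
    define Bs where "Bs = PiE S (\<lambda>_. UNIV :: bool set)"
    have finBs: "finite Bs" unfolding Bs_def using finS by (intro finite_PiE) auto
    have "\<exists>b\<in>Bs. emeasure J (E m K \<inter> C b) > 0"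
    proof (rule ccontr)
      assume neg: "\<not> ?thesis"
      have "E m K \<inter> C b \<in> null_sets J" if "b \<in> Bs" for b
      proof -
        have "\<not> 0 < emeasure J (E m K \<inter> C b)" using neg that by blast
        then have "emeasure J (E m K \<inter> C b) = 0" by (simp only: not_gr_zero)
        then show ?thesis using Es Cs by (intro null_setsI sets.Int)
      qed
      then have "AE p in J. \<forall>b\<in>Bs. p \<notin> E m K \<inter> C b"
        by (intro AE_finite_allI[OF finBs] AE_not_in)
      then have "AE p in J. p \<in> E m K \<longrightarrow> p \<in> {}"
      proof eventually_elim
        case (elim p)
        show ?case
        proof
          assume pE: "p \<in> E m K"
          define b where "b = restrict (\<lambda>s. snd p s < fst p s) S"
          have "b \<in> Bs" unfolding b_def Bs_def by auto
          moreover have "p \<in> C b" using pE unfolding C_def b_def E_def by auto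
          ultimately show "p \<in> {}" using elim pE by blast
        qed
      qed
      then have "emeasure J (E m K) \<le> emeasure J {}" by (rule emeasure_mono_AE) simp
      then show False using Epos by simp
    qed
    then obtain b where bpos: "emeasure J (E m K \<inter> C b) > 0" by blast
    define a0 where "a0 p = (\<lambda>x k. if (x, k) \<in> S then b (x, k) else arr p x k)" for p
    have bit0: "{p \<in> space J. a0 p x k} \<in> sets J" for x k
    proof (cases "(x, k) \<in> S")
      case True
      then show ?thesis unfolding a0_def by (cases "b (x, k)") auto
    next
      case False
      then show ?thesis unfolding a0_def using bit by simp
    qed
    define R where "R = {p \<in> space J. \<forall>n. P m K (erw_state (a0 p) 0 n)}"
    have Rs: "R \<in> sets J" unfolding R_def by (rule meas_state_all[OF bit0])
    have sub1: "E m K \<inter> C b \<subseteq> R"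
    proof
      fix p assume p: "p \<in> E m K \<inter> C b"
      have "a0 p = arr p"
        using p unfolding a0_def C_def arr_def arrows_def by (auto simp: fun_eq_iff)
      then show "p \<in> R" using p unfolding R_def E_def by simp
    qed
    have "emeasure J (E m K \<inter> C b) \<le> emeasure J R" by (rule emeasure_mono[OF sub1 Rs])
    then have Rpos: "emeasure J R > 0" using bpos by (rule order.strict_trans2[rotated])
    have inv: "\<forall>\<omega> u s t. s \<in> S \<longrightarrow> ((\<omega>, u) \<in> R \<longleftrightarrow> (\<omega>, u(s := t)) \<in> R)"
    proof (intro allI impI)
      fix \<omega> u s t assume s: "s \<in> S"
      have "a0 (\<omega>, u) = a0 (\<omega>, u(s := t))"
        using s unfolding a0_def arr_def arrows_def by (auto simp: fun_eq_iff)
      then show "((\<omega>, u) \<in> R \<longleftrightarrow> (\<omega>, u(s := t)) \<in> R)"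
        unfolding R_def J_def space_joint by simp
    qed
    have ell: "AE \<omega> in \<mu>. \<forall>s\<in>S. 0 < \<omega> s \<and> \<omega> s < 1"
      using assms(5) unfolding elliptic_def
      by eventually_elim (auto simp: S_def)
    define b' where "b' s = (if snd s = 1 then True else b (fst s, snd s - 1))" for s :: "int \<times> nat"
    have pos2: "emeasure J (R \<inter> {p. \<forall>s\<in>S. (snd p s < fst p s) = b' s}) > 0"
      using pos_transfer[OF p\<mu> s\<mu> finS ell _ inv, of b'] Rs Rpos unfolding J_def by simp
    define Tm where "Tm = {p \<in> space J. \<forall>n. m \<le> erw (arr p) m n}"
    have Tms: "Tm \<in> sets J" unfolding Tm_def erw_def
      by (rule meas_state_all[OF bit, of "\<lambda>n s. m \<le> fst s"])
    have sub2: "R \<inter> {p. \<forall>s\<in>S. (snd p s < fst p s) = b' s} \<subseteq> Tm"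
    proof
      fix p assume p: "p \<in> R \<inter> {p. \<forall>s\<in>S. (snd p s < fst p s) = b' s}"
      have PR: "\<forall>n. P m K (erw_state (a0 p) 0 n)" using p unfolding R_def by auto
      have "m \<le> erw (arr p) m n" for n
      proof (rule surgery[OF m])
        show "\<forall>n. m \<le> erw (a0 p) 0 n" using PR unfolding P_def erw_def by auto
        show "\<forall>n x. x < 0 \<longrightarrow> snd (erw_state (a0 p) 0 n) x \<le> K" using PR unfolding P_def by auto
        show "\<forall>x. m \<le> x \<and> x < 0 \<longrightarrow> arr p x 1"
          using p unfolding arr_def arrows_def b'_def S_def by auto
        show "\<forall>x j. m \<le> x \<and> x < 0 \<and> 1 \<le> j \<and> j \<le> K \<longrightarrow> arr p x (Suc j) = a0 p x j"
          using p unfolding arr_def arrows_def b'_def S_def a0_def by auto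
        show "\<forall>x k. \<not> (m \<le> x \<and> x < 0) \<longrightarrow> arr p x k = a0 p x k"
          unfolding a0_def S_def by auto
      qed
      then show "p \<in> Tm" using p unfolding Tm_def R_def by auto
    qed
    have "emeasure J (R \<inter> {p. \<forall>s\<in>S. (snd p s < fst p s) = b' s}) \<le> emeasure J Tm"
      by (rule emeasure_mono[OF sub2 Tms])
    then have Tmpos: "emeasure J Tm > 0" using pos2 by (rule order.strict_trans2[rotated])
    define d where "d = nat (- m)"
    have dm: "int d = - m" using m unfolding d_def by simp
    define T0' where "T0' = {p \<in> space J. \<forall>n. 0 \<le> erw (arr p) 0 n}"
    have pre: "(Th ^^ d) -` Tm \<inter> space J = T0'"
    proof -
      have "erw (arr ((Th ^^ d) p)) m n = erw (arr p) 0 n + m" for p n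
      proof -
        have "arr ((Th ^^ d) p) = (\<lambda>x. arr p (x + int d))"
          unfolding arr_def by (rule arrows_Thn)
        then show ?thesis using erw_translate[of "arr p" "int d" m n] dm by simp
      qed
      moreover have "p \<in> space J \<Longrightarrow> (Th ^^ d) p \<in> space J" for p
        using measurable_space[OF Thn_meas[OF st]] unfolding J_def by blast
      ultimately show ?thesis unfolding Tm_def T0'_def by auto
    qed
    have "emeasure J Tm = emeasure (distr J J (Th ^^ d)) Tm"
      using Thn_distr[OF st] unfolding J_def by simp
    also have "\<dots> = emeasure J T0'"
      using emeasure_distr[OF Thn_meas[OF st] Tms[unfolded J_def]] pre unfolding J_def by simp
    finally have T0'pos: "emeasure J T0' > 0" using Tmpos by simp
    have sub3: "T0' \<subseteq> T0" unfolding T0'_def T0_def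
    proof safe
      fix p n assume a: "\<forall>n. 0 \<le> erw (arr p) 0 n" and b: "erw (arr p) 0 n = - 1"
      from a have "0 \<le> erw (arr p) 0 n" by blast
      with b show False by simp
    qed
    have "emeasure J T0' \<le> emeasure J T0" by (rule emeasure_mono[OF sub3 T0s])
    then have "emeasure J T0 > 0" using T0'pos by (rule order.strict_trans2[rotated])
    then show "measure J T0 > 0" by (simp add: J.emeasure_eq_measure)
  qed
  then show ?thesis unfolding J_def T0_def Ap_def arr_def .
qed


end
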